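(* Let $1\le p<\infty$ and $E=\mathcal{L}^p(I)$. If $(b_m)$ is a Schauder basis of $E$, then $(b_m-0*_Tb_m)$ is a Schauder sequence in $E$.
   Context: Let $N\ge 2$, $I=[x_0,x_N]$, $\Delta: x_0<\dots<x_N$ a partition, $L_n(x)=a_nx+b_n$ affine with $L_n(x_0)=x_{n-1}$, $L_n(x_N)=x_n$, $I_1=[x_0,x_1]$, $I_n=(x_{n-1},x_n]$ for $n\ge2$, and $\alpha=(\alpha_1,\dots,\alpha_N)\in(\mathcal{L}^\infty(I))^N$ with $\Lambda:=\operatorname{ess\,sup}\{|\alpha_n(x)|:x\in I,n=1,\dots,N\}<1$. For $f,b\in E$, $f*_Tb$ is the unique fixed point in $E$ of the contraction $Tg(x):=f(x)+\alpha_n(L_n^{-1}(x))(g-b)(L_n^{-1}(x))$, $x\in I_n$; $0$ is the null function. A Schauder sequence is a sequence that is a Schauder basis of its closed linear span. *)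

theory Defs
  imports "HOL-Analysis.Analysis" "HOL-Probability.Essential_Supremum"
begin

definition Lp_space :: "real \<Rightarrow> real set \<Rightarrow> (real \<Rightarrow> real) set" where
  "Lp_space p I = {f. f \<in> borel_measurable (lebesgue_on I) \<and>
                      integrable (lebesgue_on I) (\<lambda>y. \<bar>f y\<bar> powr p)}"

definition Lp_norm :: "real \<Rightarrow> real set \<Rightarrow> (real \<Rightarrow> real) \<Rightarrow> real" where
  "Lp_norm p I f = (integral\<^sup>L (lebesgue_on I) (\<lambda>y. \<bar>f y\<bar> powr p)) powr (1 / p)"

(* b is a Schauder basis of the (sub)space S of L^p(I): every element has a unique
   norm-convergent expansion (elements of L^p are taken modulo a.e. equality,
   which the seminorm Lp_norm accounts for) *)
definition schauder_basis_of ::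
  "real \<Rightarrow> real set \<Rightarrow> (real \<Rightarrow> real) set \<Rightarrow> (nat \<Rightarrow> real \<Rightarrow> real) \<Rightarrow> bool" where
  "schauder_basis_of p I S b \<longleftrightarrow> (\<forall>m. b m \<in> S) \<and>
     (\<forall>f\<in>S. \<exists>!c::nat \<Rightarrow> real.
        (\<lambda>n. Lp_norm p I (\<lambda>y. f y - (\<Sum>m<n. c m * b m y))) \<longlonglongrightarrow> 0)"

definition closed_span :: "real \<Rightarrow> real set \<Rightarrow> (nat \<Rightarrow> real \<Rightarrow> real) \<Rightarrow> (real \<Rightarrow> real) set" where
  "closed_span p I b = {f \<in> Lp_space p I. \<forall>e>0. \<exists>n (c::nat \<Rightarrow> real).
        Lp_norm p I (\<lambda>y. f y - (\<Sum>m<n. c m * b m y)) < e}"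

definition schauder_sequence :: "real \<Rightarrow> real set \<Rightarrow> (nat \<Rightarrow> real \<Rightarrow> real) \<Rightarrow> bool" where
  "schauder_sequence p I b \<longleftrightarrow> schauder_basis_of p I (closed_span p I b) b"

(* L_n(t) = a_n t + b_n with L_n(x 0) = x (n-1), L_n(x N) = x n; Linv is its inverse *)
definition Linv :: "(nat \<Rightarrow> real) \<Rightarrow> nat \<Rightarrow> nat \<Rightarrow> real \<Rightarrow> real" where
  "Linv x N n y = x 0 + (y - x (n - 1)) * (x N - x 0) / (x n - x (n - 1))"

(* index n with y \<in> I_n, where I_1 = [x 0, x 1], I_n = (x (n-1), x n] *)
definition part_index :: "(nat \<Rightarrow> real) \<Rightarrow> real \<Rightarrow> nat" where
  "part_index x y = (LEAST n. 1 \<le> n \<and> y \<le> x n)"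

definition fractal_T ::
  "(nat \<Rightarrow> real) \<Rightarrow> nat \<Rightarrow> (nat \<Rightarrow> real \<Rightarrow> real) \<Rightarrow> (real \<Rightarrow> real) \<Rightarrow> (real \<Rightarrow> real)
    \<Rightarrow> (real \<Rightarrow> real) \<Rightarrow> real \<Rightarrow> real" where
  "fractal_T x N \<alpha> f b g y =
     (if y \<in> {x 0..x N} then
        (let n = part_index x y; t = Linv x N n y in f y + \<alpha> n t * (g t - b t))
      else 0)"

(* f *_T b : the fixed point of T in E = L^p(I) (unique up to a.e. equality) *)
definition fractal_star ::
  "real \<Rightarrow> (nat \<Rightarrow> real) \<Rightarrow> nat \<Rightarrow> (nat \<Rightarrow> real \<Rightarrow> real) \<Rightarrow> (real \<Rightarrow> real) \<Rightarrow> (real \<Rightarrow> real)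
    \<Rightarrow> real \<Rightarrow> real" where
  "fractal_star p x N \<alpha> f b = (SOME h. h \<in> Lp_space p {x 0..x N} \<and>
       (AE y in lebesgue_on {x 0..x N}. h y = fractal_T x N \<alpha> f b h y))"

end

theory Submission
  imports Defs
begin


locale fractal_ctx =
  fixes x :: "nat \<Rightarrow> real" and N :: nat and \<alpha> :: "nat \<Rightarrow> real \<Rightarrow> real" and p \<Lambda> :: real
  assumes N1: "1 \<le> N" and xmono: "\<forall>k<N. x k < x (Suc k)"
    and \<alpha>meas: "\<forall>n\<in>{1..N}. \<alpha> n \<in> borel_measurable (lebesgue_on {x 0..x N})"
    and \<alpha>bd: "AE t in lebesgue_on {x 0..x N}. \<forall>n\<in>{1..N}. \<bar>\<alpha> n t\<bar> \<le> \<Lambda>"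
    and \<Lambda>0: "0 \<le> \<Lambda>" and \<Lambda>1: "\<Lambda> < 1" and p1: "1 \<le> p"
begin

abbreviation "I \<equiv> {x 0..x N}"
abbreviation "M \<equiv> lebesgue_on I"
abbreviation "pidx \<equiv> part_index x"
abbreviation "Li \<equiv> Linv x N"

lemma xlt: "i < j \<Longrightarrow> j \<le> N \<Longrightarrow> x i < x j"
proof (induction j)
  case 0 then show ?case by simp
next
  case (Suc j)
  have "x j < x (Suc j)" using xmono Suc.prems by auto
  then show ?case using Suc by (cases "i = j") auto
qed

lemma xle: "i \<le> j \<Longrightarrow> j \<le> N \<Longrightarrow> x i \<le> x j"
  using xlt[of i j] by (cases "i = j") auto

lemma x0N: "x 0 < x N" using xlt[of 0 N] N1 by simp

lemma sets_I: "I \<in> sets lebesgue" by simp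

lemma space_M: "space M = I" by simp

lemma pidx:
  assumes y: "y \<in> I"
  shows "pidx y \<in> {1..N}" "y \<le> x (pidx y)" "pidx y = 1 \<or> x (pidx y - 1) < y"
proof -
  have ex: "1 \<le> N \<and> y \<le> x N" using N1 y by auto
  have P: "1 \<le> pidx y \<and> y \<le> x (pidx y)" unfolding part_index_def by (rule LeastI[where P="\<lambda>n. 1 \<le> n \<and> y \<le> x n", OF ex])
  have "pidx y \<le> N" unfolding part_index_def by (rule Least_le[where P="\<lambda>n. 1 \<le> n \<and> y \<le> x n", OF ex])
  then show "pidx y \<in> {1..N}" using P by auto
  show "y \<le> x (pidx y)" using P by auto
  show "pidx y = 1 \<or> x (pidx y - 1) < y"
  proof (cases "pidx y = 1")
    case False
    then have "pidx y - 1 < pidx y" "1 \<le> pidx y - 1" using P by auto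
    then have "\<not> (1 \<le> pidx y - 1 \<and> y \<le> x (pidx y - 1))"
      unfolding part_index_def using not_less_Least by blast
    then show ?thesis using \<open>1 \<le> pidx y - 1\<close> by auto
  qed simp
qed

lemma pidx_eq:
  assumes y: "y \<in> I" and n: "n \<in> {1..N}" and "y \<le> x n" and "n = 1 \<or> x (n - 1) < y"
  shows "pidx y = n"
  unfolding part_index_def
proof (rule Least_equality)
  show "1 \<le> n \<and> y \<le> x n" using assms by auto
  fix m assume m: "1 \<le> m \<and> y \<le> x m"
  show "n \<le> m"
  proof (rule ccontr)
    assume "\<not> n \<le> m"
    then have "m \<le> n - 1" "n \<noteq> 1" using m by auto
    then have "x m \<le> x (n - 1)" using xle n by auto
    then show False using m assms \<open>n \<noteq> 1\<close> by auto
  qed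
qed

definition P :: "nat \<Rightarrow> real set" where
  "P n = {y \<in> I. pidx y = n}"

lemma P_eq: assumes n: "n \<in> {1..N}"
  shows "P n = I \<inter> {..x n} \<inter> (if n = 1 then UNIV else {x (n - 1)<..})"
proof (rule set_eqI)
  fix y
  show "y \<in> P n \<longleftrightarrow> y \<in> I \<inter> {..x n} \<inter> (if n = 1 then UNIV else {x (n - 1)<..})"
  proof
    assume "y \<in> P n"
    then have "y \<in> I" "pidx y = n" unfolding P_def by auto
    then show "y \<in> I \<inter> {..x n} \<inter> (if n = 1 then UNIV else {x (n - 1)<..})"
      using pidx[of y] by auto
  next
    assume a: "y \<in> I \<inter> {..x n} \<inter> (if n = 1 then UNIV else {x (n - 1)<..})"
    then have "y \<in> I" "y \<le> x n" "n = 1 \<or> x (n - 1) < y" by (auto split: if_splits)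
    then show "y \<in> P n" unfolding P_def using pidx_eq[OF _ n] by auto
  qed
qed

lemma P_sets: "P n \<in> sets lebesgue"
proof (cases "n \<in> {1..N}")
  case True then show ?thesis by (simp add: P_eq)
next
  case False
  then have "P n = {}" unfolding P_def using pidx by auto
  then show ?thesis by simp
qed

lemma cn_pos: "n \<in> {1..N} \<Longrightarrow> x (n - 1) < x n" using xlt[of "n-1" n] by auto

lemma Li_affine: "n \<in> {1..N} \<Longrightarrow>
   Li n = (\<lambda>y. (x 0 - x (n - 1) * ((x N - x 0) / (x n - x (n - 1)))) + ((x N - x 0) / (x n - x (n - 1))) * y)"
proof
  fix y
  define c where "c = (x N - x 0) / (x n - x (n - 1))"
  have "Li n y = x 0 + (y - x (n - 1)) * c" unfolding Linv_def c_def by simp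
  also have "\<dots> = (x 0 - x (n - 1) * c) + c * y" by (simp add: algebra_simps)
  finally show "Li n y = (x 0 - x (n - 1) * ((x N - x 0) / (x n - x (n - 1)))) + ((x N - x 0) / (x n - x (n - 1))) * y"
    unfolding c_def .
qed

lemma Li_in:
  assumes "n \<in> {1..N}" "x (n - 1) \<le> y" "y \<le> x n"
  shows "Li n y \<in> I"
proof -
  define s where "s = (y - x (n - 1)) / (x n - x (n - 1))"
  have d: "x (n - 1) < x n" using cn_pos assms by auto
  have "0 \<le> s" "s \<le> 1" using assms d by (auto simp: s_def field_simps)
  moreover have "Li n y = x 0 + s * (x N - x 0)" using d by (simp add: Linv_def s_def field_simps)
  moreover have "s * (x N - x 0) \<le> x N - x 0"
    using \<open>0 \<le> s\<close> \<open>s \<le> 1\<close> x0N by (intro mult_left_le_one_le) auto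
  moreover have "0 \<le> s * (x N - x 0)" using \<open>0 \<le> s\<close> x0N by simp
  ultimately show ?thesis by auto
qed

lemma pidx_Li: "y \<in> I \<Longrightarrow> Li (pidx y) y \<in> I"
  apply (rule Li_in)
  using pidx[of y] by auto

lemma aff_meas: "c \<noteq> 0 \<Longrightarrow> (\<lambda>y::real. t + c * y) \<in> lebesgue \<rightarrow>\<^sub>M lebesgue"
  using lebesgue_affine_measurable[where c="\<lambda>_. c" and t=t] by simp

definition cc :: "nat \<Rightarrow> real" where "cc n = (x N - x 0) / (x n - x (n - 1))"
definition tt :: "nat \<Rightarrow> real" where "tt n = x 0 - x (n - 1) * cc n"

lemma cc_pos: "n \<in> {1..N} \<Longrightarrow> 0 < cc n"
  using cn_pos[of n] x0N unfolding cc_def by auto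

lemma Li_aff: "n \<in> {1..N} \<Longrightarrow> Li n = (\<lambda>y. tt n + cc n * y)"
  unfolding tt_def cc_def by (rule Li_affine)

lemma Li_meas_leb: "n \<in> {1..N} \<Longrightarrow> Li n \<in> lebesgue \<rightarrow>\<^sub>M lebesgue"
  using Li_aff[of n] aff_meas[of "cc n" "tt n"] cc_pos[of n] by simp

lemma Li_meas: "n \<in> {1..N} \<Longrightarrow> Li n \<in> M \<rightarrow>\<^sub>M lebesgue"
  using Li_meas_leb measurable_restrict_space1 by blast

lemma P_sets_M: "P n \<in> sets M"
  using P_sets[of n] by (subst sets_restrict_space_iff) (auto simp: P_def)

lemma meas_comp:
  assumes F: "\<And>n. n \<in> {1..N} \<Longrightarrow> F n \<in> M \<rightarrow>\<^sub>M K"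
  shows "(\<lambda>y. F (pidx y) (Li (pidx y) y)) \<in> M \<rightarrow>\<^sub>M K"
proof (rule measurable_piecewise_restrict2[where A=P])
  show "P n \<in> sets M" for n by (rule P_sets_M)
  show "space M = (\<Union>n. P n)"
    unfolding P_def using space_M by auto
  fix n
  show "\<exists>h\<in>M \<rightarrow>\<^sub>M K. \<forall>y\<in>P n. F (pidx y) (Li (pidx y) y) = h y"
  proof (cases "n \<in> {1..N}")
    case n: True
    define cl where "cl y = (if Li n y \<in> I then Li n y else x 0)" for y
    have "cl \<in> M \<rightarrow>\<^sub>M lebesgue"
      unfolding cl_def
    proof (rule measurable_If)
      show "Li n \<in> M \<rightarrow>\<^sub>M lebesgue" by (rule Li_meas[OF n])
      show "{y \<in> space M. Li n y \<in> I} \<in> sets M"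
        using measurable_sets[OF Li_meas[OF n] sets_I] by (simp add: vimage_def Int_def conj_commute)
    qed simp
    then have "cl \<in> M \<rightarrow>\<^sub>M M"
      by (rule measurable_restrict_space2[rotated]) (auto simp: cl_def x0N less_imp_le)
    then have "(\<lambda>y. F n (cl y)) \<in> M \<rightarrow>\<^sub>M K"
      using F[OF n] by (rule measurable_compose)
    moreover have "\<forall>y\<in>P n. F (pidx y) (Li (pidx y) y) = F n (cl y)"
      unfolding P_def cl_def using pidx_Li by auto
    ultimately show ?thesis by (intro bexI[where x="\<lambda>y. F n (cl y)"]) auto
  next
    case False
    then have "P n = {}" unfolding P_def using pidx by auto
    then show ?thesis using F[of 1] N1 by auto
  qed
qed

lemma ennreal_div_trick:
  assumes "A = ennreal c * B" "0 < c"
  shows "B = ennreal (1 / c) * A"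
proof -
  have "ennreal (1 / c) * A = ennreal (1 / c) * ennreal c * B" using assms by (simp add: mult.assoc)
  also have "\<dots> = ennreal (1 / c * c) * B" by (subst ennreal_mult) (use assms in auto)
  also have "\<dots> = B" using assms by simp
  finally show ?thesis by simp
qed

lemma core:
  fixes F :: "nat \<Rightarrow> real \<Rightarrow> ennreal"
  assumes F: "\<And>n. n \<in> {1..N} \<Longrightarrow> F n \<in> borel_measurable M"
  shows "(\<integral>\<^sup>+y. F (pidx y) (Li (pidx y) y) \<partial>M)
     \<le> (\<Sum>n\<in>{1..N}. ennreal ((x n - x (n - 1)) / (x N - x 0)) * (\<integral>\<^sup>+t. F n t \<partial>M))"
proof -
  define G where "G n t = (if t \<in> I then F n t else 0)" for n t
  have G: "G n \<in> borel_measurable lebesgue" if n: "n \<in> {1..N}" for n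
    using F[OF n] unfolding G_def by (subst (asm) measurable_restrict_space_iff) auto
  have GL: "(\<lambda>y. G n (Li n y)) \<in> borel_measurable lebesgue" if n: "n \<in> {1..N}" for n
    using Li_meas_leb[OF n] G[OF n] by (rule measurable_compose)
  have "(\<integral>\<^sup>+y. F (pidx y) (Li (pidx y) y) \<partial>M) \<le> (\<integral>\<^sup>+y. (\<Sum>n\<in>{1..N}. G n (Li n y)) \<partial>M)"
  proof (rule nn_integral_mono)
    fix y assume "y \<in> space M"
    then have y: "y \<in> I" by simp
    have "F (pidx y) (Li (pidx y) y) = G (pidx y) (Li (pidx y) y)"
      using pidx_Li[OF y] by (simp add: G_def)
    also have "\<dots> \<le> (\<Sum>n\<in>{1..N}. G n (Li n y))"
      by (rule member_le_sum) (use pidx[OF y] in auto)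
    finally show "F (pidx y) (Li (pidx y) y) \<le> (\<Sum>n\<in>{1..N}. G n (Li n y))" .
  qed
  also have "\<dots> = (\<integral>\<^sup>+y. (\<Sum>n\<in>{1..N}. G n (Li n y)) * indicator I y \<partial>lebesgue)"
    by (rule nn_integral_restrict_space) simp
  also have "\<dots> \<le> (\<integral>\<^sup>+y. (\<Sum>n\<in>{1..N}. G n (Li n y)) \<partial>lebesgue)"
    by (rule nn_integral_mono) (simp add: indicator_def)
  also have "\<dots> = (\<Sum>n\<in>{1..N}. (\<integral>\<^sup>+y. G n (Li n y) \<partial>lebesgue))"
    by (rule nn_integral_sum) (rule GL)
  also have "\<dots> = (\<Sum>n\<in>{1..N}. ennreal ((x n - x (n - 1)) / (x N - x 0)) * (\<integral>\<^sup>+t. F n t \<partial>M))"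
  proof (rule sum.cong)
    fix n assume n: "n \<in> {1..N}"
    have "(\<integral>\<^sup>+t. G n t \<partial>lebesgue) = ennreal \<bar>cc n\<bar> * (\<integral>\<^sup>+y. G n (tt n + cc n * y) \<partial>lebesgue)"
      by (rule nn_integral_real_affine_lebesgue) (use G[OF n] cc_pos[OF n] in auto)
    then have "(\<integral>\<^sup>+y. G n (tt n + cc n * y) \<partial>lebesgue) = ennreal (1 / cc n) * (\<integral>\<^sup>+t. G n t \<partial>lebesgue)"
      using cc_pos[OF n] by (intro ennreal_div_trick) auto
    moreover have "(\<integral>\<^sup>+t. G n t \<partial>lebesgue) = (\<integral>\<^sup>+t. F n t \<partial>M)"
      by (subst nn_integral_restrict_space) (auto simp: G_def indicator_def intro!: nn_integral_cong)
    moreover have "1 / cc n = (x n - x (n - 1)) / (x N - x 0)" unfolding cc_def by simp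
    ultimately show "(\<integral>\<^sup>+y. G n (Li n y) \<partial>lebesgue) = ennreal ((x n - x (n - 1)) / (x N - x 0)) * (\<integral>\<^sup>+t. F n t \<partial>M)"
      using Li_aff[OF n] by simp
  qed simp
  finally show ?thesis .
qed

lemma sum_weights: "(\<Sum>n\<in>{1..N}. (x n - x (n - 1)) / (x N - x 0)) = 1"
proof -
  have "(\<Sum>n\<in>{1..N}. (x n - x (n - 1))) = x N - x 0"
    using N1
  proof (induction N)
    case 0 then show ?case by simp
  next
    case (Suc K)
    show ?case
    proof (cases "K = 0")
      case True then show ?thesis by simp
    next
      case False
      then have "(\<Sum>n\<in>{1..K}. (x n - x (n - 1))) = x K - x 0" using Suc by simp
      then show ?thesis by simp
    qed
  qed
  then show ?thesis using x0N by (simp add: sum_divide_distrib[symmetric])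
qed

lemma core2:
  fixes F :: "nat \<Rightarrow> real \<Rightarrow> ennreal"
  assumes F: "\<And>n. n \<in> {1..N} \<Longrightarrow> F n \<in> borel_measurable M"
    and B: "\<And>n. n \<in> {1..N} \<Longrightarrow> (\<integral>\<^sup>+t. F n t \<partial>M) \<le> B"
  shows "(\<integral>\<^sup>+y. F (pidx y) (Li (pidx y) y) \<partial>M) \<le> B"
proof -
  have "(\<integral>\<^sup>+y. F (pidx y) (Li (pidx y) y) \<partial>M)
     \<le> (\<Sum>n\<in>{1..N}. ennreal ((x n - x (n - 1)) / (x N - x 0)) * (\<integral>\<^sup>+t. F n t \<partial>M))"
    by (rule core[OF F])
  also have "\<dots> \<le> (\<Sum>n\<in>{1..N}. ennreal ((x n - x (n - 1)) / (x N - x 0)) * B)"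
    by (intro sum_mono mult_left_mono B) auto
  also have "\<dots> = ennreal (\<Sum>n\<in>{1..N}. (x n - x (n - 1)) / (x N - x 0)) * B"
    by (subst sum_distrib_right[symmetric], subst sum_ennreal) (auto intro!: divide_nonneg_nonneg simp: xle x0N less_imp_le)
  also have "\<dots> = B" by (simp only: sum_weights) simp
  finally show ?thesis .
qed

end



lemma conv_powr:
  fixes s r l p :: real
  assumes p: "1 \<le> p" and s: "0 \<le> s" and r: "0 \<le> r" and l: "0 \<le> l" "l \<le> 1"
  shows "(l * s + (1 - l) * r) powr p \<le> l * s powr p + (1 - l) * r powr p"
proof -
  consider "0 < s" "0 < r" | "s = 0" | "r = 0" using s r by linarith
  then show ?thesis
  proof cases
    case 1
    show ?thesis using convex_onD[OF powr_convex[OF p], of "1 - l" s r] 1 l by auto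
  next
    case 2
    have "(1 - l) powr p \<le> (1 - l) powr 1" using l p by (intro powr_mono') auto
    then have "(1 - l) powr p * r powr p \<le> (1 - l) * r powr p" using l
      by (intro mult_right_mono) auto
    then show ?thesis using 2 l r by (simp add: powr_mult)
  next
    case 3
    have "l powr p \<le> l powr 1" using l p by (intro powr_mono') auto
    then have "l powr p * s powr p \<le> l * s powr p" using l
      by (intro mult_right_mono) auto
    then show ?thesis using 3 l s by (simp add: powr_mult)
  qed
qed

lemma pw_mink:
  fixes u v l p :: real
  assumes p: "1 \<le> p" and l: "0 < l" "l < 1"
  shows "\<bar>u + v\<bar> powr p \<le> l powr (1 - p) * \<bar>u\<bar> powr p + (1 - l) powr (1 - p) * \<bar>v\<bar> powr p"
proof -
  define s where "s = \<bar>u\<bar> / l"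
  define r where "r = \<bar>v\<bar> / (1 - l)"
  have sr: "0 \<le> s" "0 \<le> r" using l by (auto simp: s_def r_def)
  have "\<bar>u + v\<bar> \<le> l * s + (1 - l) * r" using l by (simp add: s_def r_def)
  then have "\<bar>u + v\<bar> powr p \<le> (l * s + (1 - l) * r) powr p" using p by (intro powr_mono2) auto
  also have "\<dots> \<le> l * s powr p + (1 - l) * r powr p" using conv_powr[OF p sr] l by auto
  also have "l * s powr p = l powr (1 - p) * \<bar>u\<bar> powr p"
    using l by (simp add: s_def powr_divide powr_diff)
  also have "(1 - l) * r powr p = (1 - l) powr (1 - p) * \<bar>v\<bar> powr p"
    using l by (simp add: r_def powr_divide powr_diff)
  finally show ?thesis .
qed

lemma mink_identity:
  fixes a b p :: real
  assumes a: "0 < a" and b: "0 < b"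
  shows "(a / (a + b)) powr (1 - p) * a powr p + (b / (a + b)) powr (1 - p) * b powr p = (a + b) powr p"
proof -
  have inv: "inverse ((a + b) powr (1 - p)) = (a + b) powr (p - 1)"
    using powr_minus[of "a + b" "1 - p"] by simp
  have e1: "(a / (a + b)) powr (1 - p) * a powr p = a * (a + b) powr (p - 1)"
  proof -
    have "(a / (a + b)) powr (1 - p) * a powr p = a powr (1 - p) * a powr p / (a + b) powr (1 - p)"
      by (simp add: powr_divide)
    also have "a powr (1 - p) * a powr p = a" using a by (simp add: powr_add[symmetric])
    also have "a / (a + b) powr (1 - p) = a * (a + b) powr (p - 1)"
      using inv by (simp add: divide_inverse)
    finally show ?thesis .
  qed
  have e2: "(b / (a + b)) powr (1 - p) * b powr p = b * (a + b) powr (p - 1)"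
  proof -
    have "(b / (a + b)) powr (1 - p) * b powr p = b powr (1 - p) * b powr p / (a + b) powr (1 - p)"
      by (simp add: powr_divide)
    also have "b powr (1 - p) * b powr p = b" using b by (simp add: powr_add[symmetric])
    also have "b / (a + b) powr (1 - p) = b * (a + b) powr (p - 1)"
      using inv by (simp add: divide_inverse)
    finally show ?thesis .
  qed
  have "(a + b) * (a + b) powr (p - 1) = (a + b) powr p"
    using a b by (simp add: powr_mult_base)
  then show ?thesis using e1 e2 by (simp add: algebra_simps)
qed

definition NI :: "real \<Rightarrow> real set \<Rightarrow> (real \<Rightarrow> real) \<Rightarrow> ennreal" where
  "NI p I u = (\<integral>\<^sup>+y. ennreal (\<bar>u y\<bar> powr p) \<partial>lebesgue_on I)"

lemma Lp_space_iff: "u \<in> Lp_space p I \<longleftrightarrow> u \<in> borel_measurable (lebesgue_on I) \<and> NI p I u < \<infinity>"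
  unfolding Lp_space_def NI_def
  by (auto simp: integrable_iff_bounded intro: measurable_abs_powr)

lemma Lp_norm_NI: "u \<in> borel_measurable (lebesgue_on I) \<Longrightarrow> Lp_norm p I u = enn2real (NI p I u) powr (1 / p)"
  unfolding Lp_norm_def NI_def by (subst integral_eq_nn_integral) (auto intro: measurable_abs_powr)

lemma Lp_norm_nonneg: "0 \<le> Lp_norm p I u"
  unfolding Lp_norm_def by simp

lemma NI_Lp_norm:
  assumes "u \<in> Lp_space p I" "0 < p"
  shows "NI p I u = ennreal (Lp_norm p I u powr p)"
proof -
  have m: "u \<in> borel_measurable (lebesgue_on I)" and f: "NI p I u < \<infinity>" using assms Lp_space_iff by auto
  have "Lp_norm p I u powr p = enn2real (NI p I u)"
    using assms by (simp add: Lp_norm_NI[OF m] powr_powr)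
  then show ?thesis using f by (simp add: ennreal_enn2real_if less_top[symmetric])
qed

lemma Lp_bound:
  assumes m: "u \<in> borel_measurable (lebesgue_on I)" and a: "0 \<le> a" and p: "0 < p"
    and le: "NI p I u \<le> ennreal (a powr p)"
  shows "u \<in> Lp_space p I" "Lp_norm p I u \<le> a"
proof -
  show "u \<in> Lp_space p I" using m le by (auto simp: Lp_space_iff top.extremum_strict intro: le_less_trans)
  have "enn2real (NI p I u) \<le> a powr p" using le by (simp add: enn2real_leI)
  then have "enn2real (NI p I u) powr (1 / p) \<le> (a powr p) powr (1 / p)"
    using p by (intro powr_mono2) auto
  also have "\<dots> = a" using a p by (simp add: powr_powr)
  finally show "Lp_norm p I u \<le> a" using Lp_norm_NI[OF m] by simp
qed

lemma NI_mink:
  assumes p: "1 \<le> p" and u: "u \<in> borel_measurable (lebesgue_on I)" and v: "v \<in> borel_measurable (lebesgue_on I)"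
    and a: "0 \<le> a" and b: "0 \<le> b"
    and ua: "NI p I u \<le> ennreal (a powr p)" and vb: "NI p I v \<le> ennreal (b powr p)"
  shows "NI p I (\<lambda>y. u y + v y) \<le> ennreal ((a + b) powr p)"
proof -
  have zero: "NI p I (\<lambda>y. u y + v y) = NI p I v" if "NI p I u \<le> ennreal (0 powr p)" "u \<in> borel_measurable (lebesgue_on I)"
    for u v :: "real \<Rightarrow> real" and p :: real
  proof -
    have "NI p I u = 0" using that by simp
    then have "AE y in lebesgue_on I. ennreal (\<bar>u y\<bar> powr p) = 0"
      unfolding NI_def by (subst (asm) nn_integral_0_iff_AE) (use that in \<open>auto intro: measurable_abs_powr\<close>)
    then have "AE y in lebesgue_on I. u y = 0" by eventually_elim simp
    then show ?thesis unfolding NI_def by (intro nn_integral_cong_AE) auto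
  qed
  show ?thesis
  proof (cases "a = 0 \<or> b = 0")
    case True
    then show ?thesis
    proof
      assume "a = 0"
      then show ?thesis using zero[of p u v] ua vb u by simp
    next
      assume "b = 0"
      then have "NI p I (\<lambda>y. v y + u y) = NI p I u" using zero[of p v u] vb v by simp
      then show ?thesis using ua \<open>b = 0\<close> by (simp add: add.commute)
    qed
  next
    case False
    then have a0: "0 < a" and b0: "0 < b" using a b by auto
    define l where "l = a / (a + b)"
    have l: "0 < l" "l < 1" using a0 b0 by (auto simp: l_def)
    have 1: "1 - l = b / (a + b)" using a0 b0 by (simp add: l_def field_simps)
    have "NI p I (\<lambda>y. u y + v y) \<le> (\<integral>\<^sup>+y. ennreal (l powr (1 - p)) * ennreal (\<bar>u y\<bar> powr p)
        + ennreal ((1 - l) powr (1 - p)) * ennreal (\<bar>v y\<bar> powr p) \<partial>lebesgue_on I)"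
      unfolding NI_def
      by (intro nn_integral_mono) (simp add: ennreal_mult[symmetric] ennreal_plus[symmetric] pw_mink[OF p l] del: ennreal_plus)
    also have "\<dots> = ennreal (l powr (1 - p)) * NI p I u + ennreal ((1 - l) powr (1 - p)) * NI p I v"
      unfolding NI_def using u v by (simp add: nn_integral_add nn_integral_cmult)
    also have "\<dots> \<le> ennreal (l powr (1 - p)) * ennreal (a powr p) + ennreal ((1 - l) powr (1 - p)) * ennreal (b powr p)"
      using ua vb by (intro add_mono mult_left_mono) auto
    also have "\<dots> = ennreal ((a + b) powr p)"
      using mink_identity[OF a0 b0, of p] 1 unfolding l_def
      by (simp add: ennreal_mult[symmetric] ennreal_plus[symmetric] del: ennreal_plus)
    finally show ?thesis .
  qed
qed

lemma NI_scale: "u \<in> borel_measurable (lebesgue_on I) \<Longrightarrow> NI p I (\<lambda>y. c * u y) = ennreal (\<bar>c\<bar> powr p) * NI p I u"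
  unfolding NI_def
  by (subst nn_integral_cmult[symmetric]) (auto simp: abs_mult powr_mult ennreal_mult intro!: nn_integral_cong measurable_abs_powr)




lemma Lp_add:
  assumes p: "1 \<le> p" and u: "u \<in> Lp_space p I" and v: "v \<in> Lp_space p I"
  shows "(\<lambda>y. u y + v y) \<in> Lp_space p I" "Lp_norm p I (\<lambda>y. u y + v y) \<le> Lp_norm p I u + Lp_norm p I v"
proof -
  have um: "u \<in> borel_measurable (lebesgue_on I)" and vm: "v \<in> borel_measurable (lebesgue_on I)"
    using u v by (auto simp: Lp_space_iff)
  have "NI p I (\<lambda>y. u y + v y) \<le> ennreal ((Lp_norm p I u + Lp_norm p I v) powr p)"
    using NI_mink[OF p um vm Lp_norm_nonneg Lp_norm_nonneg] NI_Lp_norm[OF u] NI_Lp_norm[OF v] p by simp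
  then show "(\<lambda>y. u y + v y) \<in> Lp_space p I" "Lp_norm p I (\<lambda>y. u y + v y) \<le> Lp_norm p I u + Lp_norm p I v"
    using Lp_bound[of "\<lambda>y. u y + v y" I "Lp_norm p I u + Lp_norm p I v" p] um vm p
    by (auto simp: Lp_norm_nonneg add_nonneg_nonneg)
qed

lemma Lp_scale:
  assumes p: "1 \<le> p" and u: "u \<in> Lp_space p I"
  shows "(\<lambda>y. c * u y) \<in> Lp_space p I" "Lp_norm p I (\<lambda>y. c * u y) \<le> \<bar>c\<bar> * Lp_norm p I u"
proof -
  have um: "u \<in> borel_measurable (lebesgue_on I)" using u by (auto simp: Lp_space_iff)
  have "NI p I (\<lambda>y. c * u y) = ennreal ((\<bar>c\<bar> * Lp_norm p I u) powr p)"
    using NI_scale[OF um, of p c] NI_Lp_norm[OF u] p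
    by (simp add: powr_mult ennreal_mult Lp_norm_nonneg)
  then show "(\<lambda>y. c * u y) \<in> Lp_space p I" "Lp_norm p I (\<lambda>y. c * u y) \<le> \<bar>c\<bar> * Lp_norm p I u"
    using Lp_bound[of "\<lambda>y. c * u y" I "\<bar>c\<bar> * Lp_norm p I u" p] um p
    by (auto simp: Lp_norm_nonneg)
qed

lemma Lp_diff:
  assumes p: "1 \<le> p" and u: "u \<in> Lp_space p I" and v: "v \<in> Lp_space p I"
  shows "(\<lambda>y. u y - v y) \<in> Lp_space p I" "Lp_norm p I (\<lambda>y. u y - v y) \<le> Lp_norm p I u + Lp_norm p I v"
proof -
  have v': "(\<lambda>y. (-1) * v y) \<in> Lp_space p I" "Lp_norm p I (\<lambda>y. (-1) * v y) \<le> Lp_norm p I v"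
    using Lp_scale[OF p v, of "-1"] by auto
  show "(\<lambda>y. u y - v y) \<in> Lp_space p I" using Lp_add(1)[OF p u v'(1)] by simp
  show "Lp_norm p I (\<lambda>y. u y - v y) \<le> Lp_norm p I u + Lp_norm p I v"
    using Lp_add(2)[OF p u v'(1)] v'(2) by simp
qed

lemma Lp_cong_AE:
  assumes u: "u \<in> Lp_space p I" and vm: "v \<in> borel_measurable (lebesgue_on I)"
    and ae: "AE y in lebesgue_on I. u y = v y"
  shows "v \<in> Lp_space p I" "Lp_norm p I v = Lp_norm p I u"
proof -
  have um: "u \<in> borel_measurable (lebesgue_on I)" using u by (auto simp: Lp_space_iff)
  have e: "NI p I v = NI p I u" unfolding NI_def
    by (rule nn_integral_cong_AE) (use ae in auto)
  then show "v \<in> Lp_space p I" using u vm by (simp add: Lp_space_iff)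
  show "Lp_norm p I v = Lp_norm p I u" using e by (simp add: Lp_norm_NI[OF um] Lp_norm_NI[OF vm])
qed

lemma Lp_norm_zero_AE:
  assumes um: "u \<in> borel_measurable (lebesgue_on I)" and ae: "AE y in lebesgue_on I. u y = 0"
  shows "Lp_norm p I u = 0"
proof -
  have "NI p I u = 0" unfolding NI_def
    using nn_integral_cong_AE[of "\<lambda>y. ennreal (\<bar>u y\<bar> powr p)" "\<lambda>_. 0"] ae
    by (auto elim!: eventually_mono)
  then show ?thesis by (simp add: Lp_norm_NI[OF um])
qed

lemma Lp_sum:
  fixes n :: nat
  assumes p: "1 \<le> p" and g: "\<And>m. g m \<in> Lp_space p I"
  shows "(\<lambda>y. \<Sum>m<n. c m * g m y) \<in> Lp_space p I"
proof (induction n)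
  case 0
  have "(\<lambda>y::real. 0::real) \<in> Lp_space p I" unfolding Lp_space_def by simp
  then show ?case by simp
next
  case (Suc n)
  have "(\<lambda>y. (\<Sum>m<n. c m * g m y) + c n * g n y) \<in> Lp_space p I"
    by (rule Lp_add(1)[OF p Suc.IH Lp_scale(1)[OF p g]])
  then show ?case by simp
qed

context fractal_ctx begin

definition Aop :: "(real \<Rightarrow> real) \<Rightarrow> real \<Rightarrow> real" where
  "Aop u y = (if y \<in> I then \<alpha> (pidx y) (Li (pidx y) y) * u (Li (pidx y) y) else 0)"

lemma Aop_meas:
  assumes u: "u \<in> borel_measurable M"
  shows "Aop u \<in> borel_measurable M"
proof -
  have "(\<lambda>y. (\<lambda>n t. \<alpha> n t * u t) (pidx y) (Li (pidx y) y)) \<in> borel_measurable M"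
    by (rule meas_comp) (use \<alpha>meas u in \<open>auto intro!: borel_measurable_times\<close>)
  then show ?thesis
    by (rule measurable_cong[THEN iffD1, rotated]) (simp add: Aop_def)
qed

lemma Aop_NI:
  assumes u: "u \<in> borel_measurable M"
  shows "NI p I (Aop u) \<le> ennreal (\<Lambda> powr p) * NI p I u"
proof -
  define F where "F n t = ennreal (\<bar>\<alpha> n t * u t\<bar> powr p)" for n t
  have "NI p I (Aop u) = (\<integral>\<^sup>+y. F (pidx y) (Li (pidx y) y) \<partial>M)"
    unfolding NI_def F_def by (rule nn_integral_cong) (simp add: Aop_def)
  also have "\<dots> \<le> ennreal (\<Lambda> powr p) * NI p I u"
  proof (rule core2)
    fix n assume n: "n \<in> {1..N}"
    show "F n \<in> borel_measurable M" unfolding F_def using \<alpha>meas n u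
      by (intro measurable_compose[OF measurable_abs_powr measurable_ennreal] borel_measurable_times) auto
    have "(\<integral>\<^sup>+t. F n t \<partial>M) \<le> (\<integral>\<^sup>+t. ennreal (\<Lambda> powr p) * ennreal (\<bar>u t\<bar> powr p) \<partial>M)"
      unfolding F_def
    proof (rule nn_integral_mono_AE)
      show "AE t in M. ennreal (\<bar>\<alpha> n t * u t\<bar> powr p) \<le> ennreal (\<Lambda> powr p) * ennreal (\<bar>u t\<bar> powr p)"
        using \<alpha>bd
      proof eventually_elim
        case (elim t)
        then have "\<bar>\<alpha> n t\<bar> \<le> \<Lambda>" using n by auto
        then have "\<bar>\<alpha> n t\<bar> powr p \<le> \<Lambda> powr p" using p1 by (intro powr_mono2) auto
        then have "\<bar>\<alpha> n t * u t\<bar> powr p \<le> \<Lambda> powr p * \<bar>u t\<bar> powr p"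
          by (simp add: abs_mult powr_mult mult_right_mono)
        then show ?case by (simp add: ennreal_mult[symmetric])
      qed
    qed
    also have "\<dots> = ennreal (\<Lambda> powr p) * NI p I u"
      unfolding NI_def by (rule nn_integral_cmult) (use u in \<open>auto intro: measurable_abs_powr\<close>)
    finally show "(\<integral>\<^sup>+t. F n t \<partial>M) \<le> ennreal (\<Lambda> powr p) * NI p I u" .
  qed
  finally show ?thesis .
qed

lemma Aop_Lp:
  assumes u: "u \<in> Lp_space p I"
  shows "Aop u \<in> Lp_space p I" "Lp_norm p I (Aop u) \<le> \<Lambda> * Lp_norm p I u"
proof -
  have um: "u \<in> borel_measurable M" using u by (auto simp: Lp_space_iff)
  have "NI p I (Aop u) \<le> ennreal ((\<Lambda> * Lp_norm p I u) powr p)"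
    using Aop_NI[OF um] NI_Lp_norm[OF u] p1 \<Lambda>0
    by (simp add: powr_mult ennreal_mult Lp_norm_nonneg)
  then show "Aop u \<in> Lp_space p I" "Lp_norm p I (Aop u) \<le> \<Lambda> * Lp_norm p I u"
    using Lp_bound[of "Aop u" I "\<Lambda> * Lp_norm p I u" p] Aop_meas[OF um] p1 \<Lambda>0
    by (auto simp: Lp_norm_nonneg)
qed

lemma AE_transfer:
  assumes ae: "AE t in M. Q t"
  shows "AE y in M. Q (Li (pidx y) y)"
proof -
  from ae obtain Z where Z: "{t \<in> space M. \<not> Q t} \<subseteq> Z" and Z0: "emeasure M Z = 0" and Zs: "Z \<in> sets M"
    by (rule AE_E)
  have mi: "(indicator Z :: real \<Rightarrow> ennreal) \<in> borel_measurable M"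
    by (rule borel_measurable_indicator[OF Zs])
  have "(\<integral>\<^sup>+y. (\<lambda>n. indicator Z) (pidx y) (Li (pidx y) y) \<partial>M) \<le> 0"
  proof (rule core2)
    show "(\<integral>\<^sup>+t. indicator Z t \<partial>M) \<le> 0" for n
      using Z0 nn_integral_indicator[OF Zs] by simp
  qed (rule mi)
  then have i0: "(\<integral>\<^sup>+y. indicator Z (Li (pidx y) y) \<partial>M) = 0" by simp
  have mc: "(\<lambda>y. (\<lambda>n. indicator Z :: real \<Rightarrow> ennreal) (pidx y) (Li (pidx y) y)) \<in> borel_measurable M"
    by (rule meas_comp) (rule mi)
  have "AE y in M. indicator Z (Li (pidx y) y) = (0::ennreal)"
    using nn_integral_0_iff_AE[OF mc] i0 by simp
  then show ?thesis
  proof (rule AE_mp[OF _ AE_I2], intro impI)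
    fix y assume y: "y \<in> space M" and "indicator Z (Li (pidx y) y) = (0::ennreal)"
    then have "Li (pidx y) y \<notin> Z" by (auto simp: indicator_def)
    moreover have "Li (pidx y) y \<in> space M" using pidx_Li y by simp
    ultimately show "Q (Li (pidx y) y)" using Z by blast
  qed
qed

lemma Aop_sum: "Aop (\<lambda>t. \<Sum>m\<in>S. c m * g m t) y = (\<Sum>m\<in>S. c m * Aop (g m) y)"
proof (cases "y \<in> I")
  case True
  then show ?thesis by (simp add: Aop_def sum_distrib_left algebra_simps)
next
  case False
  then have "Aop h y = 0" for h unfolding Aop_def by meson
  then show ?thesis by simp
qed

lemma Aop_diff: "Aop (\<lambda>t. u t - v t) y = Aop u y - Aop v y"
  by (simp add: Aop_def algebra_simps)

definition D :: "(real \<Rightarrow> real) \<Rightarrow> real \<Rightarrow> real" where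
  "D u y = u y - Aop u y"

lemma D_Lp:
  assumes u: "u \<in> Lp_space p I"
  shows "D u \<in> Lp_space p I" "Lp_norm p I (D u) \<le> (1 + \<Lambda>) * Lp_norm p I u"
  using Lp_diff[OF p1 u Aop_Lp(1)[OF u]] Aop_Lp(2)[OF u]
  unfolding D_def[abs_def] by (auto simp: algebra_simps)

lemma D_lower:
  assumes u: "u \<in> Lp_space p I"
  shows "(1 - \<Lambda>) * Lp_norm p I u \<le> Lp_norm p I (D u)"
proof -
  have "Lp_norm p I (\<lambda>y. D u y + Aop u y) \<le> Lp_norm p I (D u) + Lp_norm p I (Aop u)"
    by (rule Lp_add(2)[OF p1 D_Lp(1)[OF u] Aop_Lp(1)[OF u]])
  moreover have "(\<lambda>y. D u y + Aop u y) = u" by (simp add: D_def)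
  ultimately show ?thesis using Aop_Lp(2)[OF u] by (simp add: algebra_simps)
qed

end



lemma Lp_abs:
  assumes u: "u \<in> Lp_space p I"
  shows "(\<lambda>y. \<bar>u y\<bar>) \<in> Lp_space p I" "Lp_norm p I (\<lambda>y. \<bar>u y\<bar>) = Lp_norm p I u"
  using u by (auto simp: Lp_space_def Lp_norm_def)

lemma enn_le_real:
  assumes "ennreal a \<le> G" "G \<noteq> \<infinity>"
  shows "a \<le> enn2real G"
proof -
  have "enn2real (ennreal a) \<le> enn2real G"
    by (rule enn2real_mono) (use assms in \<open>auto simp: top.not_eq_extremum\<close>)
  moreover have g0: "0 \<le> enn2real G" by simp
  ultimately show ?thesis
  proof (cases "0 \<le> a")
    case False then show ?thesis using g0 by linarith
  qed simp
qed

context fractal_ctx begin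

definition Ak :: "(real \<Rightarrow> real) \<Rightarrow> nat \<Rightarrow> real \<Rightarrow> real" where
  "Ak b k = (Aop ^^ k) b"

lemma Ak_0[simp]: "Ak b 0 = b" and Ak_Suc: "Ak b (Suc k) = Aop (Ak b k)"
  by (simp_all add: Ak_def)

lemma Ak_Lp:
  assumes b: "b \<in> Lp_space p I"
  shows "Ak b k \<in> Lp_space p I \<and> Lp_norm p I (Ak b k) \<le> \<Lambda> ^ k * Lp_norm p I b"
proof (induction k)
  case 0 then show ?case using b by simp
next
  case (Suc k)
  then have "Lp_norm p I (Aop (Ak b k)) \<le> \<Lambda> * (\<Lambda> ^ k * Lp_norm p I b)"
    using Aop_Lp(2)[of "Ak b k"] \<Lambda>0 by (meson mult_left_mono order_trans)
  then show ?case using Aop_Lp(1)[of "Ak b k"] Suc by (simp add: Ak_Suc mult.assoc)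
qed

definition Gs :: "(real \<Rightarrow> real) \<Rightarrow> nat \<Rightarrow> real \<Rightarrow> real" where
  "Gs b K y = (\<Sum>k<K. \<bar>Ak b (Suc k) y\<bar>)"

lemma geo_bound: "(\<Sum>k<K. \<Lambda> ^ Suc k) \<le> 1 / (1 - \<Lambda>)"
proof -
  have "(\<Sum>k<K. \<Lambda> ^ Suc k) \<le> (\<Sum>k<K. \<Lambda> ^ k)"
    using \<Lambda>0 \<Lambda>1 by (intro sum_mono) (simp add: power_le_one mult_left_le_one_le)
  also have "\<dots> = (1 - \<Lambda> ^ K) / (1 - \<Lambda>)" using \<Lambda>1 by (simp add: sum_gp_strict)
  also have "\<dots> \<le> 1 / (1 - \<Lambda>)" using \<Lambda>0 \<Lambda>1 by (intro divide_right_mono) auto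
  finally show ?thesis .
qed

lemma Gs_Lp:
  assumes b: "b \<in> Lp_space p I"
  shows "Gs b K \<in> Lp_space p I \<and> Lp_norm p I (Gs b K) \<le> Lp_norm p I b / (1 - \<Lambda>)"
proof -
  have "Gs b K \<in> Lp_space p I \<and> Lp_norm p I (Gs b K) \<le> (\<Sum>k<K. \<Lambda> ^ Suc k) * Lp_norm p I b"
  proof (induction K)
    case 0
    have "(\<lambda>y::real. 0::real) \<in> Lp_space p I" unfolding Lp_space_def by simp
    moreover have "Lp_norm p I (\<lambda>y::real. 0::real) = 0" unfolding Lp_norm_def using p1 by simp
    ultimately show ?case by (simp add: Gs_def[abs_def])
  next
    case (Suc K)
    have e: "Gs b (Suc K) = (\<lambda>y. Gs b K y + \<bar>Ak b (Suc K) y\<bar>)" by (simp add: Gs_def[abs_def])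
    have a: "(\<lambda>y. \<bar>Ak b (Suc K) y\<bar>) \<in> Lp_space p I"
      "Lp_norm p I (\<lambda>y. \<bar>Ak b (Suc K) y\<bar>) \<le> \<Lambda> ^ Suc K * Lp_norm p I b"
      using Lp_abs[of "Ak b (Suc K)"] Ak_Lp[OF b, of "Suc K"] by auto
    have "Lp_norm p I (Gs b (Suc K)) \<le> Lp_norm p I (Gs b K) + Lp_norm p I (\<lambda>y. \<bar>Ak b (Suc K) y\<bar>)"
      unfolding e by (rule Lp_add(2)[OF p1 conjunct1[OF Suc.IH] a(1)])
    also have "\<dots> \<le> (\<Sum>k<K. \<Lambda> ^ Suc k) * Lp_norm p I b + \<Lambda> ^ Suc K * Lp_norm p I b"
      using Suc.IH a(2) by linarith
    finally show ?case using Lp_add(1)[OF p1 conjunct1[OF Suc.IH] a(1)] e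
      by (simp add: algebra_simps)
  qed
  moreover have "(\<Sum>k<K. \<Lambda> ^ Suc k) * Lp_norm p I b \<le> Lp_norm p I b / (1 - \<Lambda>)"
    using mult_right_mono[OF geo_bound[of K] Lp_norm_nonneg[of p I b]] by simp
  ultimately show ?thesis by linarith
qed

definition hfix :: "(real \<Rightarrow> real) \<Rightarrow> real \<Rightarrow> real" where
  "hfix b y = - lim (\<lambda>K. \<Sum>k<K. Ak b (Suc k) y)"

lemma fixed_point_exists:
  assumes b: "b \<in> Lp_space p I"
  shows "\<exists>h. h \<in> Lp_space p I \<and> (AE y in M. h y = Aop (\<lambda>t. h t - b t) y)"
proof -
  define C where "C = Lp_norm p I b / (1 - \<Lambda>)"
  have C0: "0 \<le> C" unfolding C_def using \<Lambda>1 Lp_norm_nonneg[of p I b] by simp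
  have Akm: "Ak b k \<in> borel_measurable M" for k using Ak_Lp[OF b, of k] by (simp add: Lp_space_iff)
  have Gsm: "Gs b K \<in> borel_measurable M" for K unfolding Gs_def[abs_def] using Akm by measurable
  have Gs0: "0 \<le> Gs b K y" for K y unfolding Gs_def by (simp add: sum_nonneg)
  define Gp where "Gp K y = ennreal (Gs b K y powr p)" for K y
  have Gpm: "Gp K \<in> borel_measurable M" for K unfolding Gp_def[abs_def] using Gsm[of K] by measurable
  have Gpinc: "incseq (\<lambda>K. Gp K y)" for y
  proof (rule incseq_SucI)
    fix K
    have "Gs b K y \<le> Gs b (Suc K) y" unfolding Gs_def by simp
    then show "Gp K y \<le> Gp (Suc K) y" unfolding Gp_def using p1 Gs0
      by (intro ennreal_leI powr_mono2) auto
  qed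
  have GpI: "(\<integral>\<^sup>+y. Gp K y \<partial>M) \<le> ennreal (C powr p)" for K
  proof -
    have "(\<integral>\<^sup>+y. Gp K y \<partial>M) = NI p I (Gs b K)" unfolding Gp_def NI_def using Gs0 by simp
    also have "\<dots> = ennreal (Lp_norm p I (Gs b K) powr p)"
      using NI_Lp_norm[of "Gs b K" p I] Gs_Lp[OF b, of K] p1 by simp
    also have "\<dots> \<le> ennreal (C powr p)"
      using Gs_Lp[OF b, of K] p1 Lp_norm_nonneg[of p I "Gs b K"] unfolding C_def
      by (intro ennreal_leI powr_mono2) auto
    finally show ?thesis .
  qed
  define Gsup where "Gsup y = (SUP K. Gp K y)" for y
  have Gsupm: "Gsup \<in> borel_measurable M" unfolding Gsup_def using Gpm by measurable
  have "(\<integral>\<^sup>+y. Gsup y \<partial>M) = (SUP K. (\<integral>\<^sup>+y. Gp K y \<partial>M))"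
    unfolding Gsup_def
    by (rule nn_integral_monotone_convergence_SUP) (auto simp: incseq_def le_fun_def Gpm dest: incseq_SucD intro: Gpinc[THEN incseqD])
  also have "\<dots> \<le> ennreal (C powr p)" by (rule SUP_least) (rule GpI)
  finally have GsupI: "(\<integral>\<^sup>+y. Gsup y \<partial>M) \<le> ennreal (C powr p)" .
  then have "(\<integral>\<^sup>+y. Gsup y \<partial>M) \<noteq> \<infinity>" by (auto simp: top_unique)
  then have aeFin: "AE y in M. Gsup y \<noteq> \<infinity>" by (rule nn_integral_PInf_AE[OF Gsupm])
  have Gs_le: "Gs b K y \<le> enn2real (Gsup y) powr (1 / p)" if fin: "Gsup y \<noteq> \<infinity>" for K y
  proof -
    have "Gp K y \<le> Gsup y" unfolding Gsup_def by (rule SUP_upper) auto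
    then have "Gs b K y powr p \<le> enn2real (Gsup y)" unfolding Gp_def using fin
      by (rule enn_le_real)
    then have "(Gs b K y powr p) powr (1 / p) \<le> enn2real (Gsup y) powr (1 / p)"
      using p1 by (intro powr_mono2) auto
    then show ?thesis using p1 Gs0[of K y] by (simp add: powr_powr)
  qed
  have good: "summable (\<lambda>k. \<bar>Ak b (Suc k) y\<bar>)" if fin: "Gsup y \<noteq> \<infinity>" for y
    by (rule summableI_nonneg_bounded[where x="enn2real (Gsup y) powr (1 / p)"])
      (use Gs_le[OF fin] in \<open>auto simp: Gs_def\<close>)
  have hval: "hfix b y = - (\<Sum>k. Ak b (Suc k) y)" if fin: "Gsup y \<noteq> \<infinity>" for y
    unfolding hfix_def using summable_LIMSEQ[OF summable_rabs_cancel[OF good[OF fin]]] by (simp add: limI)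
  have hm: "hfix b \<in> borel_measurable M"
    unfolding hfix_def[abs_def] using Akm by measurable
  have "NI p I (hfix b) \<le> (\<integral>\<^sup>+y. Gsup y \<partial>M)"
    unfolding NI_def
  proof (rule nn_integral_mono_AE)
    show "AE y in M. ennreal (\<bar>hfix b y\<bar> powr p) \<le> Gsup y"
      using aeFin
    proof eventually_elim
      case (elim y)
      have sa: "summable (\<lambda>k. \<bar>Ak b (Suc k) y\<bar>)" by (rule good[OF elim])
      have lim1: "(\<lambda>K. \<bar>\<Sum>k<K. Ak b (Suc k) y\<bar> powr p) \<longlonglongrightarrow> \<bar>\<Sum>k. Ak b (Suc k) y\<bar> powr p"
        using summable_LIMSEQ[OF summable_rabs_cancel[OF sa]] p1
        by (intro tendsto_powr' tendsto_rabs) auto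
      have "\<bar>\<Sum>k<K. Ak b (Suc k) y\<bar> powr p \<le> enn2real (Gsup y)" for K
      proof -
        have "\<bar>\<Sum>k<K. Ak b (Suc k) y\<bar> \<le> Gs b K y" unfolding Gs_def by (rule sum_abs)
        then have "\<bar>\<Sum>k<K. Ak b (Suc k) y\<bar> powr p \<le> Gs b K y powr p" using p1 by (intro powr_mono2) auto
        also have "\<dots> \<le> enn2real (Gsup y)"
        proof -
          have "Gp K y \<le> Gsup y" unfolding Gsup_def by (rule SUP_upper) auto
          then show ?thesis unfolding Gp_def using elim
            by (rule enn_le_real)
        qed
        finally show ?thesis .
      qed
      then have "\<bar>\<Sum>k. Ak b (Suc k) y\<bar> powr p \<le> enn2real (Gsup y)"
        by (intro LIMSEQ_le_const2[OF lim1]) auto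
      then have "ennreal (\<bar>hfix b y\<bar> powr p) \<le> ennreal (enn2real (Gsup y))"
        using hval[OF elim] by (intro ennreal_leI) simp
      also have "\<dots> = Gsup y" using elim by (simp add: ennreal_enn2real_if less_top)
      finally show ?case .
    qed
  qed
  also have "\<dots> < \<infinity>" using GsupI by (simp add: le_less_trans)
  finally have hLp: "hfix b \<in> Lp_space p I" using hm by (simp add: Lp_space_iff)
  have "AE y in M. hfix b y = Aop (\<lambda>t. hfix b t - b t) y"
    using AE_transfer[OF aeFin] AE_space
  proof eventually_elim
    case (elim y)
    then have y: "y \<in> I" by simp
    define t where "t = Li (pidx y) y"
    define a where "a = \<alpha> (pidx y) t"
    have fin: "Gsup t \<noteq> \<infinity>" using elim by (simp add: t_def)
    have step: "Ak b (Suc k) y = a * Ak b k t" for k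
      using y by (simp add: Ak_Suc Aop_def a_def t_def)
    have s1: "summable (\<lambda>k. Ak b (Suc k) t)" by (rule summable_rabs_cancel[OF good[OF fin]])
    then have s0: "summable (\<lambda>k. Ak b k t)" using summable_Suc_iff[of "\<lambda>k. Ak b k t"] by simp
    have "hfix b t - b t = - (\<Sum>k. Ak b k t)"
      using hval[OF fin] suminf_split_head[OF s0] by simp
    then have "Aop (\<lambda>t. hfix b t - b t) y = - (a * (\<Sum>k. Ak b k t))"
      using y by (simp add: Aop_def a_def t_def)
    also have "\<dots> = - (\<Sum>k. a * Ak b k t)" using suminf_mult[OF s0, of a] by simp
    also have "\<dots> = - (\<Sum>k. Ak b (Suc k) y)" using step by simp
    also have "\<dots> = hfix b y"
    proof -
      have ss: "summable (\<lambda>k. Ak b (Suc k) y)" using summable_mult[OF s0, of a] step by simp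
      show ?thesis unfolding hfix_def using limI[OF summable_LIMSEQ[OF ss]] by simp
    qed
    finally show ?case by simp
  qed
  then show ?thesis using hLp by blast
qed

lemma fractal_T_Aop: "fractal_T x N \<alpha> (\<lambda>_. 0) b g y = Aop (\<lambda>t. g t - b t) y"
  by (simp add: fractal_T_def Aop_def Let_def)

lemma fstar:
  assumes b: "b \<in> Lp_space p I"
  shows "fractal_star p x N \<alpha> (\<lambda>_. 0) b \<in> Lp_space p I"
    "AE y in M. fractal_star p x N \<alpha> (\<lambda>_. 0) b y = Aop (\<lambda>t. fractal_star p x N \<alpha> (\<lambda>_. 0) b t - b t) y"
proof -
  have "\<exists>h. h \<in> Lp_space p I \<and> (AE y in M. h y = fractal_T x N \<alpha> (\<lambda>_. 0) b h y)"
    using fixed_point_exists[OF b] by (simp add: fractal_T_Aop)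
  then have "fractal_star p x N \<alpha> (\<lambda>_. 0) b \<in> Lp_space p I \<and>
      (AE y in M. fractal_star p x N \<alpha> (\<lambda>_. 0) b y = fractal_T x N \<alpha> (\<lambda>_. 0) b (fractal_star p x N \<alpha> (\<lambda>_. 0) b) y)"
    unfolding fractal_star_def by (rule someI_ex)
  then show "fractal_star p x N \<alpha> (\<lambda>_. 0) b \<in> Lp_space p I"
    "AE y in M. fractal_star p x N \<alpha> (\<lambda>_. 0) b y = Aop (\<lambda>t. fractal_star p x N \<alpha> (\<lambda>_. 0) b t - b t) y"
    by (simp_all add: fractal_T_Aop)
qed

end



context fractal_ctx begin

lemma main_part:
  assumes basis: "schauder_basis_of p I (Lp_space p I) b"
  shows "schauder_sequence p I (\<lambda>m y. b m y - fractal_star p x N \<alpha> (\<lambda>_. 0) (b m) y)"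
proof -
  define fs where "fs m = fractal_star p x N \<alpha> (\<lambda>_. 0) (b m)" for m
  define b' where "b' m y = b m y - fs m y" for m y
  have bLp: "b m \<in> Lp_space p I" for m using basis unfolding schauder_basis_of_def by auto
  have fsLp: "fs m \<in> Lp_space p I" for m unfolding fs_def by (rule fstar(1)[OF bLp])
  have b'Lp: "b' m \<in> Lp_space p I" for m
    using Lp_diff(1)[OF p1 bLp fsLp] unfolding b'_def[abs_def] by blast
  have Db1: "D (b' m) y = b m y" if "fs m y = Aop (\<lambda>t. fs m t - b m t) y" for m y
    using that unfolding D_def b'_def[abs_def]
    using Aop_diff[of "b m" "fs m" y] Aop_diff[of "fs m" "b m" y] by simp
  have Db: "AE y in M. \<forall>m. D (b' m) y = b m y"
  proof (subst AE_all_countable, intro allI)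
    fix m
    show "AE y in M. D (b' m) y = b m y"
      using fstar(2)[OF bLp, of m] unfolding fs_def[symmetric] by eventually_elim (rule Db1)
  qed
  have zero_Lp: "(\<lambda>y::real. 0::real) \<in> Lp_space p I" unfolding Lp_space_def by simp
  have zero_norm: "Lp_norm p I (\<lambda>y::real. 0::real) = 0" unfolding Lp_norm_def using p1 by simp
  have sumLp: "(\<lambda>y. \<Sum>m<n. c m * g m y) \<in> Lp_space p I" if "\<And>m. g m \<in> Lp_space p I" for c g and n :: nat
    by (rule Lp_sum[OF p1 that])
  have DS: "Lp_norm p I (D (\<lambda>y. f y - (\<Sum>m<n. c m * b' m y))) = Lp_norm p I (\<lambda>y. D f y - (\<Sum>m<n. c m * b m y))"
    if f: "f \<in> Lp_space p I" for f c n
  proof -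
    have SLp: "(\<lambda>y. f y - (\<Sum>m<n. c m * b' m y)) \<in> Lp_space p I"
      by (rule Lp_diff(1)[OF p1 f sumLp[OF b'Lp]])
    have TLp: "(\<lambda>y. D f y - (\<Sum>m<n. c m * b m y)) \<in> Lp_space p I"
      by (rule Lp_diff(1)[OF p1 D_Lp(1)[OF f] sumLp[OF bLp]])
    have "AE y in M. D (\<lambda>y. f y - (\<Sum>m<n. c m * b' m y)) y = D f y - (\<Sum>m<n. c m * b m y)"
      using Db
    proof eventually_elim
      case (elim y)
      have "D (\<lambda>y. f y - (\<Sum>m<n. c m * b' m y)) y = D f y - (\<Sum>m<n. c m * D (b' m) y)"
        unfolding D_def using Aop_diff[of f "\<lambda>y. \<Sum>m<n. c m * b' m y" y] Aop_sum[of c b' "{..<n}" y]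
        by (simp add: sum_subtractf right_diff_distrib)
      then show ?case using elim by simp
    qed
    then show ?thesis
      using Lp_cong_AE(2)[OF D_Lp(1)[OF SLp], of "\<lambda>y. D f y - (\<Sum>m<n. c m * b m y)"] TLp
      by (simp add: Lp_space_iff)
  qed
  show ?thesis
    unfolding schauder_sequence_def schauder_basis_of_def b'_def[symmetric] fs_def[symmetric]
  proof (intro conjI allI ballI)
    fix m
    have "(\<Sum>j<Suc m. (if j = m then 1 else 0) * b' j y) = b' m y" for y
      by (simp add: if_distrib[of "\<lambda>z. z * b' _ y"] sum.delta cong: if_cong)
    then have "(\<lambda>y. b' m y - (\<Sum>j<Suc m. (if j = m then 1 else 0) * b' j y)) = (\<lambda>y. 0)" by simp
    then show "b' m \<in> closed_span p I b'"
      unfolding closed_span_def using b'Lp zero_norm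
      by (auto intro!: exI[of _ "Suc m"] exI[of _ "\<lambda>j. if j = m then 1 else 0"])
  next
    fix f assume "f \<in> closed_span p I b'"
    then have f: "f \<in> Lp_space p I" unfolding closed_span_def by auto
    have g: "D f \<in> Lp_space p I" by (rule D_Lp(1)[OF f])
    obtain c where cP: "(\<lambda>n. Lp_norm p I (\<lambda>y. D f y - (\<Sum>m<n. c m * b m y))) \<longlonglongrightarrow> 0"
      and cU: "\<And>d. (\<lambda>n. Lp_norm p I (\<lambda>y. D f y - (\<Sum>m<n. d m * b m y))) \<longlonglongrightarrow> 0 \<Longrightarrow> d = c"
    proof -
      have "\<exists>!c. (\<lambda>n. Lp_norm p I (\<lambda>y. D f y - (\<Sum>m<n. c m * b m y))) \<longlonglongrightarrow> 0"
        using basis g unfolding schauder_basis_of_def by blast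
      then show ?thesis using that by (elim ex1E) blast
    qed
    show "\<exists>!c. (\<lambda>n. Lp_norm p I (\<lambda>y. f y - (\<Sum>m<n. c m * b' m y))) \<longlonglongrightarrow> 0"
    proof (rule ex1I[of _ c])
      have le: "Lp_norm p I (\<lambda>y. f y - (\<Sum>m<n. c m * b' m y))
          \<le> Lp_norm p I (\<lambda>y. D f y - (\<Sum>m<n. c m * b m y)) / (1 - \<Lambda>)" for n
      proof -
        have SLp: "(\<lambda>y. f y - (\<Sum>m<n. c m * b' m y)) \<in> Lp_space p I"
          by (rule Lp_diff(1)[OF p1 f sumLp[OF b'Lp]])
        have "(1 - \<Lambda>) * Lp_norm p I (\<lambda>y. f y - (\<Sum>m<n. c m * b' m y))
            \<le> Lp_norm p I (\<lambda>y. D f y - (\<Sum>m<n. c m * b m y))"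
          using D_lower[OF SLp] DS[OF f] by simp
        then show ?thesis using \<Lambda>1 by (simp add: field_simps)
      qed
      have "(\<lambda>n. Lp_norm p I (\<lambda>y. D f y - (\<Sum>m<n. c m * b m y)) / (1 - \<Lambda>)) \<longlonglongrightarrow> 0 / (1 - \<Lambda>)"
        by (intro tendsto_divide cP) (use \<Lambda>1 in auto)
      note lim = this
      show "(\<lambda>n. Lp_norm p I (\<lambda>y. f y - (\<Sum>m<n. c m * b' m y))) \<longlonglongrightarrow> 0"
      proof (rule tendsto_sandwich[where f="\<lambda>_. 0" and h="\<lambda>n. Lp_norm p I (\<lambda>y. D f y - (\<Sum>m<n. c m * b m y)) / (1 - \<Lambda>)"])
        show "\<forall>\<^sub>F n in sequentially. 0 \<le> Lp_norm p I (\<lambda>y. f y - (\<Sum>m<n. c m * b' m y))"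
          by (rule always_eventually) (simp add: Lp_norm_nonneg)
        show "\<forall>\<^sub>F n in sequentially. Lp_norm p I (\<lambda>y. f y - (\<Sum>m<n. c m * b' m y))
            \<le> Lp_norm p I (\<lambda>y. D f y - (\<Sum>m<n. c m * b m y)) / (1 - \<Lambda>)"
          by (rule always_eventually) (intro allI le)
      qed (use lim in simp_all)
    next
      fix d assume dP: "(\<lambda>n. Lp_norm p I (\<lambda>y. f y - (\<Sum>m<n. d m * b' m y))) \<longlonglongrightarrow> 0"
      have le: "Lp_norm p I (\<lambda>y. D f y - (\<Sum>m<n. d m * b m y))
          \<le> (1 + \<Lambda>) * Lp_norm p I (\<lambda>y. f y - (\<Sum>m<n. d m * b' m y))" for n
      proof -
        have SLp: "(\<lambda>y. f y - (\<Sum>m<n. d m * b' m y)) \<in> Lp_space p I"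
          by (rule Lp_diff(1)[OF p1 f sumLp[OF b'Lp]])
        show ?thesis using D_Lp(2)[OF SLp] DS[OF f] by simp
      qed
      have "(\<lambda>n. (1 + \<Lambda>) * Lp_norm p I (\<lambda>y. f y - (\<Sum>m<n. d m * b' m y))) \<longlonglongrightarrow> (1 + \<Lambda>) * 0"
        by (intro tendsto_mult tendsto_const dP)
      note lim = this
      have "(\<lambda>n. Lp_norm p I (\<lambda>y. D f y - (\<Sum>m<n. d m * b m y))) \<longlonglongrightarrow> 0"
      proof (rule tendsto_sandwich[where f="\<lambda>_. 0" and h="\<lambda>n. (1 + \<Lambda>) * Lp_norm p I (\<lambda>y. f y - (\<Sum>m<n. d m * b' m y))"])
        show "\<forall>\<^sub>F n in sequentially. 0 \<le> Lp_norm p I (\<lambda>y. D f y - (\<Sum>m<n. d m * b m y))"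
          by (rule always_eventually) (simp add: Lp_norm_nonneg)
        show "\<forall>\<^sub>F n in sequentially. Lp_norm p I (\<lambda>y. D f y - (\<Sum>m<n. d m * b m y))
            \<le> (1 + \<Lambda>) * Lp_norm p I (\<lambda>y. f y - (\<Sum>m<n. d m * b' m y))"
          by (rule always_eventually) (intro allI le)
      qed (use lim in simp_all)
      then show "d = c" by (rule cU)
    qed
  qed
qed

end

theorem corollary6p7:
  fixes N :: nat and x :: "nat \<Rightarrow> real" and \<alpha> :: "nat \<Rightarrow> real \<Rightarrow> real"
    and p :: real and b :: "nat \<Rightarrow> real \<Rightarrow> real"
  assumes "N \<ge> 2"
    and "\<forall>k<N. x k < x (Suc k)"
    and "\<forall>n\<in>{1..N}. \<alpha> n \<in> borel_measurable (lebesgue_on {x 0..x N})"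
    and "esssup (lebesgue_on {x 0..x N}) (\<lambda>y. Max ((\<lambda>n. ereal \<bar>\<alpha> n y\<bar>) ` {1..N})) < 1"
    and "1 \<le> p"
    and "schauder_basis_of p {x 0..x N} (Lp_space p {x 0..x N}) b"
  shows "schauder_sequence p {x 0..x N}
           (\<lambda>m y. b m y - fractal_star p x N \<alpha> (\<lambda>_. 0) (b m) y)"
proof -
  let ?M = "lebesgue_on {x 0..x N}"
  let ?f = "\<lambda>y. Max ((\<lambda>n. ereal \<bar>\<alpha> n y\<bar>) ` {1..N})"
  obtain z where z1: "esssup ?M ?f < z" and z2: "z < 1" using dense[OF assms(4)] by blast
  have "z \<noteq> -\<infinity>" using z1 by auto
  moreover have "z \<noteq> \<infinity>" using z2 by auto
  ultimately obtain r where zr: "z = ereal r" by (cases z) auto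
  define \<Lambda> where "\<Lambda> = max r 0"
  have r1: "r < 1" using z2 zr by simp
  have bd: "AE t in ?M. \<forall>n\<in>{1..N}. \<bar>\<alpha> n t\<bar> \<le> \<Lambda>"
    using esssup_AE[of ?f ?M]
  proof eventually_elim
    case (elim t)
    show ?case
    proof
      fix n assume n: "n \<in> {1..N}"
      have "ereal \<bar>\<alpha> n t\<bar> \<le> ?f t" by (rule Max_ge) (use n in auto)
      also have "\<dots> < ereal r" using elim z1 zr by simp
      finally show "\<bar>\<alpha> n t\<bar> \<le> \<Lambda>" unfolding \<Lambda>_def by simp
    qed
  qed
  interpret fractal_ctx x N \<alpha> p \<Lambda>
    by unfold_locales (use assms bd r1 in \<open>auto simp: \<Lambda>_def\<close>)
  show ?thesis by (rule main_part[OF assms(6)])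
qed


end
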